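(* Let $X$ be a shift space which is eventually dendric with threshold $n$, let $U\subseteq\mathcal L(X)$ be a finite bifix code which is two-sided $X$-complete, and let $Y$ be the complete bifix decoding of $X$ with respect to $U$. Then $Y$ is eventually dendric with threshold $n$.
   Context: $A$ is a finite alphabet; a shift space is a closed shift-invariant subset $X\subseteq A^{\mathbb Z}$; $\mathcal L(X)$ is its set of finite factors. For a shift space $Z$ over an alphabet $C$ and $w\in\mathcal L(Z)$, $\mathcal E_1(w)$ is the undirected bipartite graph with vertex set the disjoint union of $\{a\in C: aw\in\mathcal L(Z)\}$ and $\{b\in C: wb\in\mathcal L(Z)\}$ and an edge $(a,b)$ iff $awb\in\mathcal L(Z)$; $Z$ is eventually dendric with threshold $n$ if $\mathcal E_1(w)$ is a tree for every $w\in\mathcal L(Z)$ of length $\ge n$. A bifix code is a set of words none of which is a proper prefix or a proper suffix of another. A set $U\subseteq\mathcal L(X)$ is right (resp. left) $X$-complete if every long enough word of $\mathcal L(X)$ has a prefix (resp. suffix) in $U$, and two-sided $X$-complete if it is both. Given such a finite bifix code $U$, a coding morphism is a bijection $\varphi:B\to U$ from an alphabet $B$, extended to a morphism $B^*\to A^*$; the set $\varphi^{-1}(\mathcal L(X))$ is the language of a shift space $Y\subseteq B^{\mathbb Z}$, called the complete bifix decoding of $X$ with respect to $U$. *)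

theory Defs
  imports Main "HOL-Library.Sublist"
begin

definition factor :: "(int \<Rightarrow> 'a) \<Rightarrow> int \<Rightarrow> nat \<Rightarrow> 'a list" where
  "factor x i n = map (\<lambda>k. x (i + int k)) [0..<n]"

definition lang :: "(int \<Rightarrow> 'a) set \<Rightarrow> 'a list set" where
  "lang X = {w. \<exists>x\<in>X. \<exists>i. w = factor x i (length w)}"

text \<open>Shift space over alphabet A: a subset of A^Z, invariant under the shift (sigma X = X),
  and closed in the product topology (A discrete); closedness is written out as:
  every point all of whose finite factors are factors of X lies in X.\<close>
definition shift_space :: "'a set \<Rightarrow> (int \<Rightarrow> 'a) set \<Rightarrow> bool" where
  "shift_space A X \<longleftrightarrow> finite A
     \<and> (\<forall>x\<in>X. \<forall>i. x i \<in> A)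
     \<and> (\<lambda>x. \<lambda>i. x (i + 1)) ` X = X
     \<and> (\<forall>x. (\<forall>i. x i \<in> A) \<longrightarrow> (\<forall>i n. factor x i n \<in> lang X) \<longrightarrow> x \<in> X)"

definition ug_connected :: "'v set \<Rightarrow> ('v \<Rightarrow> 'v \<Rightarrow> bool) \<Rightarrow> bool" where
  "ug_connected V E \<longleftrightarrow> (\<forall>u\<in>V. \<forall>v\<in>V. \<exists>p. p \<noteq> [] \<and> hd p = u \<and> last p = v \<and> set p \<subseteq> V
      \<and> (\<forall>i. i + 1 < length p \<longrightarrow> E (p ! i) (p ! (i + 1))))"

definition ug_acyclic :: "'v set \<Rightarrow> ('v \<Rightarrow> 'v \<Rightarrow> bool) \<Rightarrow> bool" where
  "ug_acyclic V E \<longleftrightarrow> \<not> (\<exists>p. length p \<ge> 3 \<and> distinct p \<and> set p \<subseteq> V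
      \<and> (\<forall>i. i + 1 < length p \<longrightarrow> E (p ! i) (p ! (i + 1))) \<and> E (last p) (hd p))"

definition ug_tree :: "'v set \<Rightarrow> ('v \<Rightarrow> 'v \<Rightarrow> bool) \<Rightarrow> bool" where
  "ug_tree V E \<longleftrightarrow> V \<noteq> {} \<and> ug_connected V E \<and> ug_acyclic V E"

text \<open>Extension graph E_1(w) of a word w in the language L: bipartite, left copy Inl, right copy Inr.\<close>
definition ext_vertices :: "'a list set \<Rightarrow> 'a list \<Rightarrow> ('a + 'a) set" where
  "ext_vertices L w = Inl ` {a. a # w \<in> L} \<union> Inr ` {b. w @ [b] \<in> L}"

fun ext_adj :: "'a list set \<Rightarrow> 'a list \<Rightarrow> ('a + 'a) \<Rightarrow> ('a + 'a) \<Rightarrow> bool" where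
  "ext_adj L w (Inl a) (Inr b) = (a # w @ [b] \<in> L)"
| "ext_adj L w (Inr b) (Inl a) = (a # w @ [b] \<in> L)"
| "ext_adj L w _ _ = False"

definition eventually_dendric :: "(int \<Rightarrow> 'a) set \<Rightarrow> nat \<Rightarrow> bool" where
  "eventually_dendric Z n \<longleftrightarrow>
     (\<forall>w\<in>lang Z. length w \<ge> n \<longrightarrow> ug_tree (ext_vertices (lang Z) w) (ext_adj (lang Z) w))"

definition bifix_code :: "'a list set \<Rightarrow> bool" where
  "bifix_code U \<longleftrightarrow> (\<forall>u\<in>U. \<forall>v\<in>U. \<not> strict_prefix u v \<and> \<not> strict_suffix u v)"

definition right_complete :: "(int \<Rightarrow> 'a) set \<Rightarrow> 'a list set \<Rightarrow> bool" where
  "right_complete X U \<longleftrightarrow> (\<exists>N. \<forall>w\<in>lang X. length w \<ge> N \<longrightarrow> (\<exists>u\<in>U. prefix u w))"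

definition left_complete :: "(int \<Rightarrow> 'a) set \<Rightarrow> 'a list set \<Rightarrow> bool" where
  "left_complete X U \<longleftrightarrow> (\<exists>N. \<forall>w\<in>lang X. length w \<ge> N \<longrightarrow> (\<exists>u\<in>U. suffix u w))"

definition two_sided_complete :: "(int \<Rightarrow> 'a) set \<Rightarrow> 'a list set \<Rightarrow> bool" where
  "two_sided_complete X U \<longleftrightarrow> right_complete X U \<and> left_complete X U"

definition complete_bifix_decoding ::
  "(int \<Rightarrow> 'a) set \<Rightarrow> 'a list set \<Rightarrow> 'b set \<Rightarrow> ('b \<Rightarrow> 'a list) \<Rightarrow> (int \<Rightarrow> 'b) set \<Rightarrow> bool" where
  "complete_bifix_decoding X U B \<phi> Y \<longleftrightarrow> finite B \<and> bij_betw \<phi> B U \<and> shift_space B Y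
     \<and> lang Y = {v. set v \<subseteq> B \<and> concat (map \<phi> v) \<in> lang X}"

end

theory Submission
  imports Defs
begin



definition reach :: "'v set \<Rightarrow> ('v \<Rightarrow> 'v \<Rightarrow> bool) \<Rightarrow> 'v \<Rightarrow> 'v \<Rightarrow> bool" where
  "reach V E = (\<lambda>a b. a \<in> V \<and> b \<in> V \<and> E a b)\<^sup>*\<^sup>*"

definition rem :: "('v \<Rightarrow> 'v \<Rightarrow> bool) \<Rightarrow> 'v \<Rightarrow> 'v \<Rightarrow> 'v \<Rightarrow> 'v \<Rightarrow> bool" where
  "rem E x y = (\<lambda>a b. E a b \<and> \<not>(a = x \<and> b = y) \<and> \<not>(a = y \<and> b = x))"

lemma chain_conv: "(\<forall>i. i + 1 < length p \<longrightarrow> E (p!i) (p!(i+1))) = successively E p"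
  by (simp add: successively_conv_nth)

lemma path_reach: "successively E p \<Longrightarrow> p \<noteq> [] \<Longrightarrow> set p \<subseteq> V \<Longrightarrow> reach V E (hd p) (last p)"
proof (induction p)
  case Nil then show ?case by simp
next
  case (Cons a p)
  show ?case
  proof (cases "p = []")
    case True then show ?thesis by (simp add: reach_def)
  next
    case False
    then have "E a (hd p)" "successively E p" using Cons.prems by (auto simp: successively_Cons)
    moreover have "hd p \<in> V" using False Cons.prems by (cases p) auto
    ultimately have "reach V E (hd p) (last p)" using Cons False by auto
    then show ?thesis using \<open>E a (hd p)\<close> \<open>hd p \<in> V\<close> Cons.prems False unfolding reach_def
      by (auto intro: converse_rtranclp_into_rtranclp)
  qed
qed

lemma reach_path:
  assumes "reach V E x y" "x \<in> V"
  shows "\<exists>p. p \<noteq> [] \<and> hd p = x \<and> last p = y \<and> set p \<subseteq> V \<and> distinct p \<and> successively E p"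
  using assms unfolding reach_def
proof (induction rule: rtranclp_induct)
  case base then show ?case by (intro exI[of _ "[x]"]) auto
next
  case (step y z)
  then obtain p where p: "p \<noteq> []" "hd p = x" "last p = y" "set p \<subseteq> V" "distinct p" "successively E p"
    by auto
  show ?case
  proof (cases "z \<in> set p")
    case True
    then obtain i where i: "i < length p" "p ! i = z" by (auto simp: in_set_conv_nth)
    define q where "q = take (Suc i) p"
    have "p = q @ drop (Suc i) p" by (simp add: q_def)
    then have sq: "successively E q" using p(6) by (metis successively_append_iff)
    have "last q = z" using i by (simp add: q_def take_Suc_conv_app_nth)
    moreover have "q \<noteq> []" "hd q = x" using p i by (auto simp: q_def)
    moreover have "set q \<subseteq> V" using p(4) by (auto simp: q_def dest: in_set_takeD)
    moreover have "distinct q" using p(5) by (simp add: q_def)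
    ultimately show ?thesis using sq by blast
  next
    case False
    show ?thesis
      apply (intro exI[of _ "p @ [z]"])
      using p False step by (auto simp: successively_append_iff)
  qed
qed

lemma reach_sym:
  assumes "\<forall>a b. E a b = E b a" "reach V E x y" shows "reach V E y x"
  using assms(2) unfolding reach_def
proof (induction rule: rtranclp_induct)
  case base then show ?case by simp
next
  case (step y z) then show ?case using assms(1)
    by (auto intro: converse_rtranclp_into_rtranclp)
qed

lemma reach_trans: "reach V E x y \<Longrightarrow> reach V E y z \<Longrightarrow> reach V E x z"
  unfolding reach_def by auto

lemma reach_edge: "x \<in> V \<Longrightarrow> y \<in> V \<Longrightarrow> E x y \<Longrightarrow> reach V E x y"
  unfolding reach_def by auto

lemma reach_refl: "reach V E x x"
  unfolding reach_def by auto

lemma reach_mono: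
  assumes "reach V E x y" "V \<subseteq> V'" "\<And>a b. a \<in> V \<Longrightarrow> b \<in> V \<Longrightarrow> E a b \<Longrightarrow> E' a b"
  shows "reach V' E' x y"
  using assms(1) unfolding reach_def
proof (induction rule: rtranclp_induct)
  case base then show ?case by simp
next
  case (step y z) then show ?case using assms(2,3)
    by (auto intro: rtranclp.rtrancl_into_rtrancl)
qed

lemma reach_in: "reach V E x y \<Longrightarrow> x \<noteq> y \<Longrightarrow> y \<in> V"
  unfolding reach_def by (induction rule: rtranclp_induct) auto

lemma conn_iff: "ug_connected V E \<longleftrightarrow> (\<forall>x\<in>V. \<forall>y\<in>V. reach V E x y)"
proof
  assume "ug_connected V E"
  then show "\<forall>x\<in>V. \<forall>y\<in>V. reach V E x y"
    unfolding ug_connected_def chain_conv using path_reach by metis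
next
  assume "\<forall>x\<in>V. \<forall>y\<in>V. reach V E x y"
  then show "ug_connected V E"
    unfolding ug_connected_def chain_conv using reach_path by metis
qed

lemma acyc_iff:
  assumes sym: "\<forall>a b. E a b = E b a" and irr: "\<forall>a. \<not> E a a"
  shows "ug_acyclic V E \<longleftrightarrow> (\<forall>x\<in>V. \<forall>y\<in>V. E x y \<longrightarrow> \<not> reach V (rem E x y) x y)"
proof
  assume ac: "ug_acyclic V E"
  show "\<forall>x\<in>V. \<forall>y\<in>V. E x y \<longrightarrow> \<not> reach V (rem E x y) x y"
  proof (intro ballI impI notI)
    fix x y assume xy: "x \<in> V" "y \<in> V" "E x y" "reach V (rem E x y) x y"
    then obtain p where p: "p \<noteq> []" "hd p = x" "last p = y" "set p \<subseteq> V" "distinct p"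
      "successively (rem E x y) p" using reach_path by metis
    have "x \<noteq> y" using xy irr by auto
    have l2: "length p \<ge> 2"
    proof (rule ccontr)
      assume "\<not> length p \<ge> 2"
      moreover have "length p \<noteq> 0" using p(1) by simp
      ultimately have "length p = 1" by linarith
      then obtain a where "p = [a]" by (metis One_nat_def length_0_conv length_Suc_conv)
      then show False using p \<open>x \<noteq> y\<close> by auto
    qed
    have l3: "length p \<ge> 3"
    proof (rule ccontr)
      assume "\<not> length p \<ge> 3"
      then have "length p = 2" using l2 by auto
      then obtain a b where "p = [a, b]"
        by (metis (no_types, lifting) One_nat_def Suc_1 length_0_conv length_Suc_conv)
      then show False using p by (auto simp: rem_def)
    qed
    have "successively E p" using p(6) by (rule successively_mono) (auto simp: rem_def)
    moreover have "E (last p) (hd p)" using p xy sym by auto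
    ultimately show False using ac l3 p unfolding ug_acyclic_def chain_conv by blast
  qed
next
  assume H: "\<forall>x\<in>V. \<forall>y\<in>V. E x y \<longrightarrow> \<not> reach V (rem E x y) x y"
  show "ug_acyclic V E"
  proof (unfold ug_acyclic_def chain_conv, rule notI, elim exE conjE)
    fix p assume p: "3 \<le> length p" "distinct p" "set p \<subseteq> V" "successively E p" "E (last p) (hd p)"
    define x where "x = last p"
    define y where "y = hd p"
    have ne: "p \<noteq> []" using p by auto
    have xV: "x \<in> V" "y \<in> V" using p ne by (auto simp: x_def y_def)
    have lx: "x = p ! (length p - 1)" using ne by (simp add: x_def last_conv_nth)
    have hy: "y = p ! 0" using ne by (simp add: y_def hd_conv_nth)
    have "successively (rem E x y) p"
      unfolding successively_conv_nth
    proof (intro allI impI)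
      fix i assume i: "Suc i < length p"
      have e: "E (p!i) (p!Suc i)" using p(4) i by (simp add: successively_nth)
      have n1: "p ! i \<noteq> x" using i p(2) lx by (simp add: nth_eq_iff_index_eq)
      have "p ! i = y \<Longrightarrow> p ! Suc i \<noteq> x"
      proof
        assume "p ! i = y" "p ! Suc i = x"
        have "i = 0" using \<open>p ! i = y\<close> i p(2) hy
          by (metis Suc_lessD nth_eq_iff_index_eq zero_less_Suc order.strict_trans)
        moreover have "Suc i = length p - 1" using \<open>p ! Suc i = x\<close> i p(2) lx by (simp add: nth_eq_iff_index_eq)
        ultimately show False using p(1) by auto
      qed
      then show "rem E x y (p!i) (p!Suc i)" using e n1 by (auto simp: rem_def)
    qed
    then have "reach V (rem E x y) y x" using path_reach[OF _ ne p(3)] by (simp add: x_def y_def)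
    then have "reach V (rem E x y) x y" by (rule reach_sym[rotated]) (auto simp: rem_def sym)
    then show False using H xV p(5) by (auto simp: x_def y_def)
  qed
qed


lemma tree_iso:
  assumes T: "ug_tree V E" and inj: "inj_on h V" and hE: "\<forall>a\<in>V. \<forall>b\<in>V. E2 (h a) (h b) = E a b"
  shows "ug_tree (h ` V) E2"
proof -
  have ne: "h ` V \<noteq> {}" using T by (auto simp: ug_tree_def)
  have rt: "reach (h ` V) E2 (h a) (h b)" if "reach V E a b" for a b
    using that unfolding reach_def
  proof (induction rule: rtranclp_induct)
    case base then show ?case by simp
  next
    case (step y z) then show ?case using hE by (auto intro: rtranclp.rtrancl_into_rtrancl)
  qed
  have conn: "ug_connected (h ` V) E2"
    using T rt unfolding ug_tree_def conn_iff by blast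
  have ac: "ug_acyclic (h ` V) E2"
  proof (unfold ug_acyclic_def chain_conv, rule notI, elim exE conjE)
    fix p2 assume p2: "3 \<le> length p2" "distinct p2" "set p2 \<subseteq> h ` V" "successively E2 p2"
      "E2 (last p2) (hd p2)"
    define p where "p = map (inv_into V h) p2"
    have pp: "p2 = map h p" unfolding p_def using p2(3)
      by (simp add: map_idI[symmetric] subset_iff f_inv_into_f)
    have sp: "set p \<subseteq> V" unfolding p_def using p2(3) by (auto intro: inv_into_into)
    have "distinct p" using p2(2) pp by (simp add: distinct_map)
    moreover have "successively E p"
    proof -
      have "successively (\<lambda>x y. E2 (h x) (h y)) p" using p2(4) pp by (simp add: successively_map)
      then show ?thesis by (rule successively_mono) (use sp hE in auto)
    qed
    moreover have "p \<noteq> []" using p2(1) pp by auto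
    then have "E (last p) (hd p)" using p2(5) pp sp hE by (simp add: last_map hd_map subset_iff)
    moreover have "3 \<le> length p" using p2(1) pp by simp
    ultimately show False using T sp unfolding ug_tree_def ug_acyclic_def chain_conv by blast
  qed
  show ?thesis using ne conn ac by (simp add: ug_tree_def)
qed

lemma rem_sym: "\<forall>a b. E a b = E b a \<Longrightarrow> \<forall>a b. rem E x y a b = rem E x y b a"
  by (auto simp: rem_def)

lemma tree_conn_acyc:
  assumes "ug_tree V E" "\<forall>a b. E a b = E b a" "\<forall>a. \<not> E a a"
  shows "\<forall>x\<in>V. \<forall>y\<in>V. reach V E x y" "\<forall>x\<in>V. \<forall>y\<in>V. E x y \<longrightarrow> \<not> reach V (rem E x y) x y"
  using assms by (auto simp: ug_tree_def conn_iff acyc_iff)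

lemma star_tree:
  assumes sym: "\<forall>a b. E a b = E b a" and irr: "\<forall>a. \<not> E a a" and cV: "c \<in> V"
    and touch: "\<forall>a\<in>V. \<forall>b\<in>V. E a b \<longrightarrow> a = c \<or> b = c"
    and adj: "\<forall>v\<in>V. v \<noteq> c \<longrightarrow> E c v"
  shows "ug_tree V E"
proof -
  have rc: "reach V E c v" if "v \<in> V" for v
    using that adj cV by (cases "v = c") (auto intro: reach_refl reach_edge)
  have conn: "ug_connected V E" unfolding conn_iff
    using rc reach_sym[OF sym] reach_trans by metis
  have key: "z \<noteq> d" if "d \<in> V" "d \<noteq> c" "reach V (rem E c d) c z" for d z
    using that(3) unfolding reach_def
  proof (induction rule: rtranclp_induct)
    case base then show ?case using that by auto
  next
    case (step y z)
    show ?case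
    proof
      assume "z = d"
      then have "y = c" using step touch that by (auto simp: rem_def)
      then show False using step \<open>z = d\<close> by (auto simp: rem_def)
    qed
  qed
  have ac: "ug_acyclic V E" unfolding acyc_iff[OF sym irr]
  proof (intro ballI impI notI)
    fix x y assume xy: "x \<in> V" "y \<in> V" "E x y" "reach V (rem E x y) x y"
    then have "x = c \<or> y = c" using touch by auto
    then show False
    proof
      assume "x = c"
      then have "y \<noteq> c" using irr xy by auto
      then show False using key[of y y] xy \<open>x = c\<close> by auto
    next
      assume "y = c"
      then have "x \<noteq> c" using irr xy by auto
      have "rem E x y = rem E c x" using \<open>y = c\<close> by (auto simp: rem_def fun_eq_iff)
      then have "reach V (rem E c x) c x" using xy(4) \<open>y = c\<close> reach_sym[OF rem_sym[OF sym]] by metis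
      then show False using key[of x x] xy \<open>x \<noteq> c\<close> by auto
    qed
  qed
  show ?thesis using conn ac cV by (auto simp: ug_tree_def)
qed


lemma glue:
  assumes symE: "\<forall>a b. E a b = E b a" and irrE: "\<forall>a. \<not> E a a"
    and symE': "\<forall>a b. E' a b = E' b a" and irrE': "\<forall>a. \<not> E' a a"
    and cV: "c \<in> V'" and VV: "V = (V' - {c}) \<union> M" and MV: "M \<inter> V' = {}"
    and NV: "N \<subseteq> V' - {c}"
    and hN: "\<forall>b\<in>V'. E' c b \<longleftrightarrow> b \<in> N"
    and hM: "\<forall>a\<in>M. \<forall>b\<in>V. E a b \<longrightarrow> b \<in> N"
    and hsame: "\<forall>a\<in>V'-{c}. \<forall>b\<in>V'-{c}. E a b \<longleftrightarrow> E' a b"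
    and T1: "ug_tree V' E'" and T2: "ug_tree (M \<union> N) E"
  shows "ug_tree V E"
proof -
  note C1 = tree_conn_acyc[OF T1 symE' irrE']
  note C2 = tree_conn_acyc[OF T2 symE irrE]
  have MNV: "M \<union> N \<subseteq> V" using VV NV by auto
  obtain m0 where m0: "m0 \<in> M \<union> N" using T2 by (auto simp: ug_tree_def)
  have rT: "reach V E a b" if "a \<in> M \<union> N" "b \<in> M \<union> N" for a b
    using C2(1) that MNV by (meson reach_mono)
  define f where "f z = (if z = c then m0 else z)" for z
  have fr: "reach V E m0 (f z)" if "(\<lambda>a b. a \<in> V' \<and> b \<in> V' \<and> E' a b)\<^sup>*\<^sup>* c z" for z
    using that
  proof (induction rule: rtranclp_induct)
    case base then show ?case by (simp add: f_def reach_refl)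
  next
    case (step y z)
    show ?case
    proof (cases "y = c")
      case True
      then have "z \<in> N" "z \<noteq> c" using hN step NV by auto
      then show ?thesis using rT m0 by (simp add: f_def)
    next
      case False
      show ?thesis
      proof (cases "z = c")
        case True then show ?thesis by (simp add: f_def reach_refl)
      next
        case False
        then have "E y z" "y \<in> V" "z \<in> V" using \<open>y \<noteq> c\<close> step hsame VV by auto
        then show ?thesis using step.IH \<open>y \<noteq> c\<close> False
          by (auto simp: f_def intro: reach_trans reach_edge)
      qed
    qed
  qed
  have rm0: "reach V E m0 z" if "z \<in> V" for z
  proof (cases "z \<in> M \<union> N")
    case True then show ?thesis using rT m0 by auto
  next
    case False
    then have "z \<in> V'" "z \<noteq> c" using that VV by auto
    then show ?thesis using fr[of z] C1(1) cV by (auto simp: reach_def f_def)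
  qed
  have conn: "ug_connected V E" unfolding conn_iff
    using rm0 reach_sym[OF symE] reach_trans by metis
  define S where "S = reach (V' - {c}) E'"
  have K: "v1 = v2" if "v1 \<in> N" "v2 \<in> N" "S v1 v2" for v1 v2
  proof (rule ccontr)
    assume ne: "v1 \<noteq> v2"
    have "reach V' (rem E' c v1) v1 v2"
      using that(3) unfolding S_def by (rule reach_mono) (auto simp: rem_def)
    moreover have "reach V' (rem E' c v1) v2 c"
      using that NV hN cV ne symE' by (intro reach_edge) (auto simp: rem_def)
    ultimately have "reach V' (rem E' c v1) c v1"
      using reach_trans reach_sym[OF rem_sym[OF symE']] by metis
    then show False using C1(2) cV that NV hN by auto
  qed
  have ac: "ug_acyclic V E" unfolding acyc_iff[OF symE irrE]
  proof (intro ballI impI notI)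
    fix x y assume xy: "x \<in> V" "y \<in> V" "E x y" "reach V (rem E x y) x y"
    show False
    proof (cases "x \<in> M \<or> y \<in> M")
      case True
      then have xyT: "x \<in> M \<union> N" "y \<in> M \<union> N" using hM xy symE by blast+
      have inv: "\<exists>t\<in>M \<union> N. reach (M \<union> N) (rem E x y) x t \<and> (z = t \<or> (t \<in> N \<and> S t z))"
        if "(\<lambda>a b. a \<in> V \<and> b \<in> V \<and> rem E x y a b)\<^sup>*\<^sup>* x z" for z
        using that
      proof (induction rule: rtranclp_induct)
        case base then show ?case using xyT by (auto intro: reach_refl)
      next
        case (step z z')
        then obtain t where t: "t \<in> M \<union> N" "reach (M \<union> N) (rem E x y) x t" "z = t \<or> (t \<in> N \<and> S t z)"
          by auto
        have Ezz: "E z z'" using step by (auto simp: rem_def)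
        show ?case
        proof (cases "z \<in> M \<or> z' \<in> M")
          case True
          then have zT: "z \<in> M \<union> N" "z' \<in> M \<union> N" using hM step Ezz symE by blast+
          have "z = t"
          proof (rule ccontr)
            assume "z \<noteq> t"
            then have "t \<in> N" "S t z" using t by auto
            then have "z \<in> V' - {c}" using \<open>z \<noteq> t\<close> unfolding S_def by (metis reach_in)
            then have "z \<in> N" using zT MV by auto
            then show False using K \<open>t \<in> N\<close> \<open>S t z\<close> \<open>z \<noteq> t\<close> by auto
          qed
          then have "reach (M \<union> N) (rem E x y) x z'"
            using t(2) zT step by (auto intro: reach_trans reach_edge)
          then show ?thesis using zT by auto
        next
          case False
          then have zV: "z \<in> V' - {c}" "z' \<in> V' - {c}" using step VV by auto
          then have "S z z'" using Ezz hsame unfolding S_def by (auto intro: reach_edge)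
          then show ?thesis using t zV MV
            unfolding S_def by (auto intro: reach_trans)
        qed
      qed
      obtain t where t: "t \<in> M \<union> N" "reach (M \<union> N) (rem E x y) x t" "y = t \<or> (t \<in> N \<and> S t y)"
        using inv xy(4) unfolding reach_def by blast
      show False
      proof (cases "y = t")
        case True then show False using t C2(2) xyT xy by auto
      next
        case False
        then have "t \<in> N" "S t y" using t by auto
        then have "y \<in> V' - {c}" using False unfolding S_def by (metis reach_in)
        then have "y \<in> N" using xyT MV by auto
        then show False using K \<open>t \<in> N\<close> \<open>S t y\<close> False by auto
      qed
    next
      case False
      then have xyV: "x \<in> V' - {c}" "y \<in> V' - {c}" using xy VV by auto
      define g where "g z = (if z \<in> M then c else z)" for z
      have gr: "reach V' (rem E' x y) x (g z)"
        if "(\<lambda>a b. a \<in> V \<and> b \<in> V \<and> rem E x y a b)\<^sup>*\<^sup>* x z" for z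
        using that
      proof (induction rule: rtranclp_induct)
        case base then show ?case using False by (simp add: g_def reach_refl)
      next
        case (step z z')
        have Ezz: "E z z'" using step by (auto simp: rem_def)
        have "reach V' (rem E' x y) (g z) (g z')"
        proof (cases "z \<in> M")
          case True
          then have "z' \<in> N" using hM step Ezz by blast
          then have "z' \<notin> M" "z' \<in> V'" "z' \<noteq> c" using NV MV by auto
          then show ?thesis using True \<open>z' \<in> N\<close> hN cV xyV
            by (auto simp: g_def rem_def intro!: reach_edge)
        next
          case zM: False
          show ?thesis
          proof (cases "z' \<in> M")
            case True
            then have "z \<in> N" using hM step Ezz symE by blast
            then have "z \<in> V'" "z \<noteq> c" using NV by auto
            then show ?thesis using True zM \<open>z \<in> N\<close> hN cV xyV symE'
              by (auto simp: g_def rem_def intro!: reach_edge)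
          next
            case False
            then have "z \<in> V' - {c}" "z' \<in> V' - {c}" using zM step VV by auto
            then show ?thesis using False zM step hsame
              by (auto simp: g_def rem_def intro!: reach_edge)
          qed
        qed
        then show ?case using step.IH by (metis reach_trans)
      qed
      have "reach V' (rem E' x y) x y"
        using gr[of y] xy(4) False unfolding reach_def by (simp add: g_def)
      then show False using C1(2) xyV xy hsame by auto
    qed
  qed
  show ?thesis using conn ac MNV m0 by (auto simp: ug_tree_def)
qed





fun GE :: "'a list set \<Rightarrow> 'a list \<Rightarrow> ('a list + 'a list) \<Rightarrow> ('a list + 'a list) \<Rightarrow> bool" where
  "GE L w (Inl p) (Inr q) = (p @ w @ q \<in> L)"
| "GE L w (Inr q) (Inl p) = (p @ w @ q \<in> L)"
| "GE L w _ _ = False"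

definition GV :: "'a list set \<Rightarrow> 'a list set \<Rightarrow> 'a list set \<Rightarrow> 'a list \<Rightarrow> ('a list + 'a list) set" where
  "GV L P Q w = Inl ` {p\<in>P. p @ w \<in> L} \<union> Inr ` {q\<in>Q. w @ q \<in> L}"

lemma GE_sym: "\<forall>a b. GE L w a b = GE L w b a"
proof (intro allI)
  fix a b :: "'a list + 'a list" show "GE L w a b = GE L w b a" by (cases a; cases b) auto
qed

lemma GE_irr: "\<forall>a. \<not> GE L w a a"
proof
  fix a :: "'a list + 'a list" show "\<not> GE L w a a" by (cases a) auto
qed

definition factorial :: "'a list set \<Rightarrow> bool" where
  "factorial L \<longleftrightarrow> (\<forall>x y. x @ y \<in> L \<longrightarrow> x \<in> L \<and> y \<in> L)"

definition extl :: "'a list set \<Rightarrow> bool" where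
  "extl L \<longleftrightarrow> (\<forall>y\<in>L. \<exists>a. a # y \<in> L)"

definition sc :: "'a list set \<Rightarrow> bool" where
  "sc P \<longleftrightarrow> (\<forall>x\<in>P. \<forall>y\<in>P. \<not> strict_suffix x y)"

definition lc :: "'a list set \<Rightarrow> 'a list set \<Rightarrow> bool" where
  "lc L P \<longleftrightarrow> (\<exists>N. \<forall>y\<in>L. N \<le> length y \<longrightarrow> (\<exists>x\<in>P. suffix x y))"

abbreviation A1 :: "'a list set" where "A1 \<equiv> range (\<lambda>a. [a])"

lemma extend_left:
  assumes "extl L" "y \<in> L" shows "\<exists>z. length z = k \<and> z @ y \<in> L"
proof (induction k)
  case 0 then show ?case using assms by auto
next
  case (Suc k)
  then obtain z where "length z = k" "z @ y \<in> L" by auto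
  then obtain a where "a # z @ y \<in> L" using assms(1) by (auto simp: extl_def)
  then show ?case using \<open>length z = k\<close> by (intro exI[of _ "a # z"]) auto
qed

lemma star_GV:
  assumes "w \<in> L" shows "ug_tree (GV L {[]} Q w) (GE L w)"
proof (rule star_tree[OF GE_sym GE_irr, where c = "Inl []"])
  show "Inl [] \<in> GV L {[]} Q w" using assms by (auto simp: GV_def)
  show "\<forall>a\<in>GV L {[]} Q w. \<forall>b\<in>GV L {[]} Q w. GE L w a b \<longrightarrow> a = Inl [] \<or> b = Inl []"
    by (auto simp: GV_def)
  show "\<forall>v\<in>GV L {[]} Q w. v \<noteq> Inl [] \<longrightarrow> GE L w (Inl []) v"
    by (auto simp: GV_def)
qed

lemma left_tree:
  assumes fac: "factorial L" and ext: "extl L"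
    and H: "\<forall>x\<in>L. m \<le> length x \<longrightarrow> ug_tree (GV L A1 Q x) (GE L x)"
    and wL: "w \<in> L" and wm: "m \<le> length w"
  shows "finite P \<Longrightarrow> sc P \<Longrightarrow> lc L P \<Longrightarrow> ug_tree (GV L P Q w) (GE L w)"
proof (induction "sum length P" arbitrary: P rule: less_induct)
  case less
  have facl: "x \<in> L" if "x @ y \<in> L" for x y using fac that unfolding factorial_def by blast
  have facr: "y \<in> L" if "x @ y \<in> L" for x y using fac that unfolding factorial_def by blast
  obtain N where N: "\<forall>y\<in>L. N \<le> length y \<longrightarrow> (\<exists>x\<in>P. suffix x y)"
    using less.prems by (auto simp: lc_def)
  obtain z where "length z = N" "z @ w \<in> L" using extend_left[OF ext wL] by blast
  then have "\<exists>x\<in>P. suffix x (z @ w)" using N by simp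
  then obtain x0 where "x0 \<in> P" by blast
  then have Pne: "P \<noteq> {}" by auto
  show ?case
  proof (cases "[] \<in> P")
    case True
    have "p = []" if "p \<in> P" for p
    proof (rule ccontr)
      assume "p \<noteq> []"
      then have "strict_suffix [] p" by (auto simp: strict_suffix_def)
      then show False using that True less.prems(2) by (auto simp: sc_def)
    qed
    then have "P = {[]}" using True by blast
    then show ?thesis using star_GV wL by simp
  next
    case False
    have fl: "finite (length ` P)" using less.prems(1) by simp
    have "Max (length ` P) \<in> length ` P" using fl Pne by (intro Max_in) auto
    then obtain u where u1: "u \<in> P" "length u = Max (length ` P)" by auto
    have u: "u \<in> P" "\<forall>p\<in>P. length p \<le> length u"
      using u1 fl Max_ge by auto
    then obtain a u' where uu: "u = a # u'" using False by (cases u) auto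
    define Pn where "Pn = {p\<in>P. \<exists>b. p = b # u'}"
    define P' where "P' = (P - Pn) \<union> {u'}"
    have key: "b # u' \<in> P" if bL: "b # u' \<in> L" for b
    proof -
      obtain z where z: "length z = N" "z @ b # u' \<in> L" using extend_left[OF ext bL] by blast
      then have "\<exists>x\<in>P. suffix x (z @ b # u')" using N by simp
      then obtain x where x: "x \<in> P" "suffix x (z @ b # u')" by blast
      have "length x \<le> length u" using u(2) x(1) by blast
      then have "length x \<le> length (b # u')" using uu by simp
      have s2: "suffix (b # u') (z @ b # u')" by (rule suffix_appendI) simp
      have sx: "suffix x (b # u')" by (rule suffix_length_suffix[OF x(2) s2 \<open>length x \<le> length (b # u')\<close>])
      show ?thesis
      proof (cases "x = b # u'")
        case True then show ?thesis using x by simp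
      next
        case False
        then have "suffix x u'" using sx suffix_Cons[of x b u'] by blast
        have s1: "suffix x u" using \<open>suffix x u'\<close> uu by (simp add: suffix_ConsI)
        have "length x \<le> length u'" using \<open>suffix x u'\<close> by (rule suffix_length_le)
        then have "x \<noteq> u" using uu by auto
        then have "strict_suffix x u" using s1 by (simp add: strict_suffix_def)
        then show ?thesis using x(1) u(1) less.prems(2) unfolding sc_def by blast
      qed
    qed
    have "strict_suffix u' u" using strict_suffix_tl[of u] uu by simp
    then have u'P: "u' \<notin> P" using u(1) less.prems(2) unfolding sc_def by blast
    have fP': "finite P'" using less.prems(1) by (simp add: P'_def)
    have scP': "sc P'"
      unfolding sc_def
    proof (intro ballI notI)
      fix x y assume xy: "x \<in> P'" "y \<in> P'" "strict_suffix x y"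
      show False
      proof (cases "x = u'")
        case True
        then have "y \<noteq> u'" using xy by auto
        then have yP: "y \<in> P" "y \<notin> Pn" using xy by (auto simp: P'_def)
        then have "length y \<le> length u" using u(2) by blast
        moreover have "length u' < length y" using xy True suffix_length_less by blast
        ultimately have ly: "length y = Suc (length u')" using uu by simp
        obtain zs where zs: "y = zs @ u'" using xy True by (auto simp: strict_suffix_def suffix_def)
        then have "length zs = 1" using ly by simp
        then obtain b where "zs = [b]" by (metis One_nat_def length_0_conv length_Suc_conv)
        then have "y = b # u'" using zs by simp
        then show False using yP by (auto simp: Pn_def)
      next
        case False
        then have xP: "x \<in> P" using xy by (auto simp: P'_def)
        show False
        proof (cases "y = u'")
          case True
          then have "suffix x u'" "length x < length u'" using xy by (auto simp: strict_suffix_def suffix_length_less)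
          then have "suffix x u" "length x < length u" using uu by (simp_all add: suffix_ConsI)
          then have "strict_suffix x u" by (auto simp: strict_suffix_def)
          then show False using xP u(1) less.prems(2) unfolding sc_def by blast
        next
          case False
          then have "y \<in> P" using xy by (auto simp: P'_def)
          then show False using xP xy(3) less.prems(2) unfolding sc_def by blast
        qed
      qed
    qed
    have lcP': "lc L P'"
      unfolding lc_def
    proof (intro exI[of _ N] ballI impI)
      fix y assume yL: "y \<in> L" "N \<le> length y"
      have "\<exists>x\<in>P. suffix x y" using N yL by blast
      then obtain x where x: "x \<in> P" "suffix x y" by blast
      show "\<exists>x\<in>P'. suffix x y"
      proof (cases "x \<in> Pn")
        case True
        then obtain b where "x = b # u'" unfolding Pn_def by blast
        then have "suffix u' y" using x(2) suffix_ConsD[of b u' y] by simp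
        moreover have "u' \<in> P'" unfolding P'_def by blast
        ultimately show ?thesis by blast
      next
        case False
        then have "x \<in> P'" using x(1) unfolding P'_def by blast
        then show ?thesis using x(2) by blast
      qed
    qed
    have "sum length P' < sum length P"
    proof -
      have fPn: "finite Pn" using less.prems(1) by (simp add: Pn_def)
      have PnP: "Pn \<subseteq> P" by (auto simp: Pn_def)
      have "sum length P = sum length (P - Pn) + sum length Pn"
        by (rule sum.subset_diff[OF PnP less.prems(1)])
      moreover have "sum length P' = sum length (P - Pn) + length u'"
        using u'P less.prems(1) by (simp add: P'_def)
      moreover have "sum length Pn \<ge> length u"
        using fPn u uu by (intro member_le_sum) (auto simp: Pn_def)
      ultimately show ?thesis using uu by simp
    qed
    then have IH: "ug_tree (GV L P' Q w) (GE L w)" by (rule less.hyps[OF _ fP' scP' lcP'])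
    show ?thesis
    proof (cases "u' @ w \<in> L")
      case False
      have "{p\<in>P. p @ w \<in> L} = {p\<in>P'. p @ w \<in> L}"
      proof -
        have "p @ w \<notin> L" if pPn: "p \<in> Pn" for p
        proof
          assume pw: "p @ w \<in> L"
          obtain b where "p = b # u'" using pPn unfolding Pn_def by blast
          then have "[b] @ (u' @ w) \<in> L" using pw by simp
          then show False using False facr by blast
        qed
        then show ?thesis using False by (auto simp: P'_def)
      qed
      then show ?thesis using IH by (simp add: GV_def)
    next
      case True
      define M :: "('a list + 'a list) set" where "M = Inl ` {b # u' | b. b # u' @ w \<in> L}"
      define Nn :: "('a list + 'a list) set" where "Nn = Inr ` {q\<in>Q. u' @ w @ q \<in> L}"
      have T2: "ug_tree (M \<union> Nn) (GE L w)"
      proof -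
        define h :: "'a list + 'a list \<Rightarrow> 'a list + 'a list" where "h = map_sum (\<lambda>p. p @ u') id"
        have T: "ug_tree (GV L A1 Q (u' @ w)) (GE L (u' @ w))" using H True wm by auto
        have "ug_tree (h ` GV L A1 Q (u' @ w)) (GE L w)"
        proof (rule tree_iso[OF T])
          show "inj_on h (GV L A1 Q (u' @ w))"
          proof (rule inj_onI)
            fix v1 v2 :: "'a list + 'a list" assume "h v1 = h v2"
            then show "v1 = v2" by (cases v1; cases v2) (simp_all add: h_def)
          qed
          show "\<forall>a\<in>GV L A1 Q (u' @ w). \<forall>b\<in>GV L A1 Q (u' @ w). GE L w (h a) (h b) = GE L (u' @ w) a b"
            by (auto simp: GV_def h_def)
        qed
        moreover have "h ` GV L A1 Q (u' @ w) = M \<union> Nn"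
        proof
          show "h ` GV L A1 Q (u' @ w) \<subseteq> M \<union> Nn"
            by (auto simp: GV_def h_def M_def Nn_def)
          show "M \<union> Nn \<subseteq> h ` GV L A1 Q (u' @ w)"
          proof
            fix v assume "v \<in> M \<union> Nn"
            then show "v \<in> h ` GV L A1 Q (u' @ w)"
            proof
              assume "v \<in> M"
              then obtain b where b: "v = Inl (b # u')" "b # u' @ w \<in> L" by (auto simp: M_def)
              have "Inl [b] \<in> GV L A1 Q (u' @ w)" using b by (auto simp: GV_def)
              moreover have "h (Inl [b]) = v" using b by (simp add: h_def)
              ultimately show ?thesis by (metis image_eqI)
            next
              assume "v \<in> Nn"
              then obtain q where q: "v = Inr q" "q \<in> Q" "u' @ w @ q \<in> L" by (auto simp: Nn_def)
              have "Inr q \<in> GV L A1 Q (u' @ w)" using q by (auto simp: GV_def)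
              moreover have "h (Inr q) = v" using q by (simp add: h_def)
              ultimately show ?thesis by (metis image_eqI)
            qed
          qed
        qed
        ultimately show ?thesis by simp
      qed
      have VV: "GV L P Q w = (GV L P' Q w - {Inl u'}) \<union> M"
      proof -
        have "{p\<in>P. p @ w \<in> L} = {p\<in>P'. p @ w \<in> L} - {u'} \<union> {b # u' | b. b # u' @ w \<in> L}"
        proof -
          have "b # u' \<in> P" if "b # u' @ w \<in> L" for b
          proof -
            have "(b # u') @ w \<in> L" using that by simp
            then have "b # u' \<in> L" using facl by blast
            then show ?thesis by (rule key)
          qed
          then show ?thesis using u'P by (auto simp: P'_def Pn_def)
        qed
        then show ?thesis by (auto simp: GV_def M_def)
      qed
      show ?thesis
      proof (rule glue[OF GE_sym GE_irr GE_sym GE_irr _ VV _ _ _ _ _ IH T2])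
        show "Inl u' \<in> GV L P' Q w" using True by (auto simp: GV_def P'_def)
        show "M \<inter> GV L P' Q w = {}" by (auto simp: M_def GV_def P'_def Pn_def)
        show "Nn \<subseteq> GV L P' Q w - {Inl u'}"
        proof
          fix v assume "v \<in> Nn"
          then obtain q where q: "v = Inr q" "q \<in> Q" "u' @ (w @ q) \<in> L" by (auto simp: Nn_def)
          then have "w @ q \<in> L" using facr by blast
          then show "v \<in> GV L P' Q w - {Inl u'}" using q by (auto simp: GV_def)
        qed
        show "\<forall>b\<in>GV L P' Q w. GE L w (Inl u') b = (b \<in> Nn)"
          by (auto simp: GV_def Nn_def)
        show "\<forall>a\<in>M. \<forall>b\<in>GV L P Q w. GE L w a b \<longrightarrow> b \<in> Nn"
        proof (intro ballI impI)
          fix v1 v2 assume v: "v1 \<in> M" "v2 \<in> GV L P Q w" "GE L w v1 v2"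
          then obtain b where b: "v1 = Inl (b # u')" by (auto simp: M_def)
          show "v2 \<in> Nn"
          proof (cases v2)
            case (Inl p) then show ?thesis using v b by simp
          next
            case (Inr q)
            then have "q \<in> Q" using v by (auto simp: GV_def)
            moreover have "[b] @ (u' @ w @ q) \<in> L" using v b Inr by simp
            then have "u' @ w @ q \<in> L" using facr by blast
            ultimately show ?thesis using Inr by (simp add: Nn_def)
          qed
        qed
        show "\<forall>a\<in>GV L P' Q w - {Inl u'}. \<forall>b\<in>GV L P' Q w - {Inl u'}. GE L w a b = GE L w a b"
          by simp
      qed
    qed
  qed
qed




lemma tree_iso_rev:
  assumes T: "ug_tree (h ` V) E2" and inj: "inj_on h V" and hE: "\<forall>a\<in>V. \<forall>b\<in>V. E2 (h a) (h b) = E a b"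
  shows "ug_tree V E"
proof -
  define g where "g = inv_into V h"
  have gV: "g ` (h ` V) = V" using inj by (simp add: g_def image_image)
  have "ug_tree (g ` (h ` V)) E"
  proof (rule tree_iso[OF T])
    show "inj_on g (h ` V)" unfolding g_def by (rule inj_on_inv_into) simp
    show "\<forall>a\<in>h ` V. \<forall>b\<in>h ` V. E (g a) (g b) = E2 a b"
      using hE inj by (auto simp: g_def)
  qed
  then show ?thesis using gV by simp
qed

lemma mem_rev_image: "x \<in> rev ` S \<longleftrightarrow> rev x \<in> S"
  by (metis image_iff rev_rev_ident)

lemma rev_GV:
  assumes T: "ug_tree (GV L P Q w) (GE L w)"
  shows "ug_tree (GV (rev ` L) (rev ` Q) (rev ` P) (rev w)) (GE (rev ` L) (rev w))"
proof -
  define h :: "'a list + 'a list \<Rightarrow> 'a list + 'a list" where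
    "h = (\<lambda>v. case v of Inl p \<Rightarrow> Inr (rev p) | Inr q \<Rightarrow> Inl (rev q))"
  have "ug_tree (h ` GV L P Q w) (GE (rev ` L) (rev w))"
  proof (rule tree_iso[OF T])
    show "inj_on h (GV L P Q w)"
    proof (rule inj_onI)
      fix v1 v2 :: "'a list + 'a list" assume "h v1 = h v2"
      then show "v1 = v2" by (cases v1; cases v2) (simp_all add: h_def)
    qed
    show "\<forall>a\<in>GV L P Q w. \<forall>b\<in>GV L P Q w. GE (rev ` L) (rev w) (h a) (h b) = GE L w a b"
    proof (intro ballI)
      fix a b :: "'a list + 'a list"
      show "GE (rev ` L) (rev w) (h a) (h b) = GE L w a b"
        by (cases a; cases b) (simp_all add: h_def mem_rev_image)
    qed
  qed
  moreover have "h ` GV L P Q w = GV (rev ` L) (rev ` Q) (rev ` P) (rev w)"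
  proof
    show "h ` GV L P Q w \<subseteq> GV (rev ` L) (rev ` Q) (rev ` P) (rev w)"
      by (auto simp: GV_def h_def mem_rev_image)
    show "GV (rev ` L) (rev ` Q) (rev ` P) (rev w) \<subseteq> h ` GV L P Q w"
    proof
      fix v assume v: "v \<in> GV (rev ` L) (rev ` Q) (rev ` P) (rev w)"
      show "v \<in> h ` GV L P Q w"
      proof (cases v)
        case (Inl q')
        then have "rev q' \<in> Q" "w @ rev q' \<in> L" using v by (auto simp: GV_def mem_rev_image)
        then have "Inr (rev q') \<in> GV L P Q w" by (auto simp: GV_def)
        moreover have "h (Inr (rev q')) = v" using Inl by (simp add: h_def)
        ultimately show ?thesis by (metis image_eqI)
      next
        case (Inr p')
        then have "rev p' \<in> P" "rev p' @ w \<in> L" using v by (auto simp: GV_def mem_rev_image)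
        then have "Inl (rev p') \<in> GV L P Q w" by (auto simp: GV_def)
        moreover have "h (Inl (rev p')) = v" using Inr by (simp add: h_def)
        ultimately show ?thesis by (metis image_eqI)
      qed
    qed
  qed
  ultimately show ?thesis by simp
qed

lemma rev_rev_image: "rev ` rev ` S = S"
  by (simp add: image_image)

lemma rev_A1: "rev ` (A1 :: 'a list set) = A1"
  by (simp add: image_image)

definition extr :: "'a list set \<Rightarrow> bool" where
  "extr L \<longleftrightarrow> (\<forall>y\<in>L. \<exists>a. y @ [a] \<in> L)"

definition pc :: "'a list set \<Rightarrow> bool" where
  "pc P \<longleftrightarrow> (\<forall>x\<in>P. \<forall>y\<in>P. \<not> strict_prefix x y)"

definition rc :: "'a list set \<Rightarrow> 'a list set \<Rightarrow> bool" where
  "rc L P \<longleftrightarrow> (\<exists>N. \<forall>y\<in>L. N \<le> length y \<longrightarrow> (\<exists>x\<in>P. prefix x y))"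

lemma factorial_rev: assumes "factorial L" shows "factorial (rev ` L)"
  unfolding factorial_def
proof (intro allI impI)
  fix x y :: "'a list" assume "x @ y \<in> rev ` L"
  then have "rev y @ rev x \<in> L" by (simp add: mem_rev_image)
  then have "rev y \<in> L \<and> rev x \<in> L" using assms unfolding factorial_def by blast
  then show "x \<in> rev ` L \<and> y \<in> rev ` L" by (simp add: mem_rev_image)
qed

lemma extl_rev: assumes "extr L" shows "extl (rev ` L)"
  unfolding extl_def
proof
  fix y :: "'a list" assume "y \<in> rev ` L"
  then have "rev y \<in> L" by (simp add: mem_rev_image)
  then obtain a where "rev y @ [a] \<in> L" using assms unfolding extr_def by blast
  then have "a # y \<in> rev ` L" by (simp add: mem_rev_image)
  then show "\<exists>a. a # y \<in> rev ` L" by blast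
qed

lemma sc_rev: assumes "pc S" shows "sc (rev ` S)"
  unfolding sc_def
proof (intro ballI notI)
  fix x y assume "x \<in> rev ` S" "y \<in> rev ` S" "strict_suffix x y"
  then obtain x0 y0 where "x0 \<in> S" "y0 \<in> S" "x = rev x0" "y = rev y0" by blast
  then have "strict_prefix x0 y0" using \<open>strict_suffix x y\<close> by (simp add: strict_suffix_to_prefix)
  then show False using assms \<open>x0 \<in> S\<close> \<open>y0 \<in> S\<close> unfolding pc_def by blast
qed

lemma lc_rev: "rc L S \<Longrightarrow> lc (rev ` L) (rev ` S)"
  unfolding rc_def lc_def
proof (elim exE, intro exI ballI impI)
  fix N y assume H: "\<forall>y\<in>L. N \<le> length y \<longrightarrow> (\<exists>x\<in>S. prefix x y)" and y: "y \<in> rev ` L" "N \<le> length y"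
  then have "rev y \<in> L" "N \<le> length (rev y)" by (auto simp: mem_rev_image)
  then obtain x where "x \<in> S" "prefix x (rev y)" using H by blast
  then have "rev x \<in> rev ` S" "suffix (rev x) y" by (simp_all add: suffix_to_prefix)
  then show "\<exists>x\<in>rev ` S. suffix x y" by blast
qed

lemma right_tree:
  assumes fac: "factorial L" and ext: "extr L"
    and D: "\<forall>x\<in>L. n \<le> length x \<longrightarrow> ug_tree (GV L A1 A1 x) (GE L x)"
    and S: "finite S" "pc S" "rc L S" and x: "x \<in> L" "n \<le> length x"
  shows "ug_tree (GV L A1 S x) (GE L x)"
proof -
  have H: "\<forall>y\<in>rev ` L. n \<le> length y \<longrightarrow> ug_tree (GV (rev ` L) A1 A1 y) (GE (rev ` L) y)"
  proof (intro ballI impI)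
    fix y assume "y \<in> rev ` L" "n \<le> length y"
    then have "rev y \<in> L" "n \<le> length (rev y)" by (auto simp: mem_rev_image)
    then have "ug_tree (GV L A1 A1 (rev y)) (GE L (rev y))" using D by blast
    from rev_GV[OF this] show "ug_tree (GV (rev ` L) A1 A1 y) (GE (rev ` L) y)"
      by (simp add: rev_A1)
  qed
  have "ug_tree (GV (rev ` L) (rev ` S) A1 (rev x)) (GE (rev ` L) (rev x))"
    by (rule left_tree[OF factorial_rev[OF fac] extl_rev[OF ext] H])
       (use x S in \<open>auto simp: mem_rev_image intro: sc_rev lc_rev\<close>)
  from rev_GV[OF this] show ?thesis by (simp add: rev_A1 rev_rev_image)
qed

lemma both_tree:
  assumes fac: "factorial L" and exl: "extl L" and exr: "extr L"
    and D: "\<forall>x\<in>L. n \<le> length x \<longrightarrow> ug_tree (GV L A1 A1 x) (GE L x)"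
    and U: "finite U" "pc U" "rc L U" "sc U" "lc L U" and v: "v \<in> L" "n \<le> length v"
  shows "ug_tree (GV L U U v) (GE L v)"
proof -
  have H: "\<forall>x\<in>L. n \<le> length x \<longrightarrow> ug_tree (GV L A1 U x) (GE L x)"
    using right_tree[OF fac exr D U(1,2,3)] by blast
  show ?thesis by (rule left_tree[OF fac exl H v U(1,4,5)])
qed




lemma length_factor: "length (factor x i k) = k"
  by (simp add: factor_def)

lemma nth_factor: "j < k \<Longrightarrow> factor x i k ! j = x (i + int j)"
  by (simp add: factor_def)

lemma factor_eq: "ys = factor x i k \<longleftrightarrow> (length ys = k \<and> (\<forall>j<k. ys ! j = x (i + int j)))"
proof
  assume "ys = factor x i k"
  then show "length ys = k \<and> (\<forall>j<k. ys ! j = x (i + int j))" by (simp add: length_factor nth_factor)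
next
  assume H: "length ys = k \<and> (\<forall>j<k. ys ! j = x (i + int j))"
  show "ys = factor x i k"
  proof (rule nth_equalityI)
    show "length ys = length (factor x i k)" using H by (simp add: length_factor)
    fix j assume "j < length ys"
    then show "ys ! j = factor x i k ! j" using H by (simp add: nth_factor)
  qed
qed

lemma lang_factorial: "factorial (lang X)"
  unfolding factorial_def
proof (intro allI impI)
  fix a b assume "a @ b \<in> lang X"
  then obtain x i where x: "x \<in> X" "a @ b = factor x i (length (a @ b))" by (auto simp: lang_def)
  then have nth: "\<forall>j<length a + length b. (a @ b) ! j = x (i + int j)" by (simp add: factor_eq)
  have "a = factor x i (length a)"
    unfolding factor_eq
  proof (intro conjI allI impI)
    fix j assume "j < length a"
    then show "a ! j = x (i + int j)" using nth[rule_format, of j] by (simp add: nth_append)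
  qed simp
  moreover have "b = factor x (i + int (length a)) (length b)"
    unfolding factor_eq
  proof (intro conjI allI impI)
    fix j assume "j < length b"
    then show "b ! j = x (i + int (length a) + int j)" using nth[rule_format, of "length a + j"]
      by (simp add: nth_append add.assoc)
  qed simp
  ultimately show "a \<in> lang X \<and> b \<in> lang X" using x(1) by (auto simp: lang_def)
qed

lemma lang_extl: "extl (lang X)"
  unfolding extl_def
proof
  fix y assume "y \<in> lang X"
  then obtain x i where x: "x \<in> X" "y = factor x i (length y)" by (auto simp: lang_def)
  then have nth: "\<forall>j<length y. y ! j = x (i + int j)" by (simp add: factor_eq)
  have "x (i - 1) # y = factor x (i - 1) (length (x (i - 1) # y))"
    unfolding factor_eq
  proof (intro conjI allI impI)
    fix j assume j: "j < length (x (i - 1) # y)"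
    show "(x (i - 1) # y) ! j = x (i - 1 + int j)"
    proof (cases j)
      case 0 then show ?thesis by simp
    next
      case (Suc j')
      then have "j' < length y" using j by simp
      then show ?thesis using nth[rule_format, of j'] Suc by simp
    qed
  qed simp
  then show "\<exists>a. a # y \<in> lang X" using x(1) by (auto simp: lang_def)
qed

lemma lang_extr: "extr (lang X)"
  unfolding extr_def
proof
  fix y assume "y \<in> lang X"
  then obtain x i where x: "x \<in> X" "y = factor x i (length y)" by (auto simp: lang_def)
  then have nth: "\<forall>j<length y. y ! j = x (i + int j)" by (simp add: factor_eq)
  have "y @ [x (i + int (length y))] = factor x i (length (y @ [x (i + int (length y))]))"
    unfolding factor_eq
  proof (intro conjI allI impI)
    fix j assume j: "j < length (y @ [x (i + int (length y))])"
    show "(y @ [x (i + int (length y))]) ! j = x (i + int j)"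
    proof (cases "j < length y")
      case True then show ?thesis using nth by (simp add: nth_append)
    next
      case False
      then have "j = length y" using j by simp
      then show ?thesis by simp
    qed
  qed simp
  then show "\<exists>a. y @ [a] \<in> lang X" using x(1) by (auto simp: lang_def)
qed

lemma dendric_GV:
  assumes "eventually_dendric X n"
  shows "\<forall>x\<in>lang X. n \<le> length x \<longrightarrow> ug_tree (GV (lang X) A1 A1 x) (GE (lang X) x)"
proof (intro ballI impI)
  fix w assume w: "w \<in> lang X" "n \<le> length w"
  define L where "L = lang X"
  have T: "ug_tree (ext_vertices L w) (ext_adj L w)" using assms w by (simp add: eventually_dendric_def L_def)
  define h :: "'a + 'a \<Rightarrow> 'a list + 'a list" where "h = map_sum (\<lambda>a. [a]) (\<lambda>a. [a])"
  have "ug_tree (h ` ext_vertices L w) (GE L w)"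
  proof (rule tree_iso[OF T])
    show "inj_on h (ext_vertices L w)"
    proof (rule inj_onI)
      fix v1 v2 :: "'a + 'a" assume "h v1 = h v2"
      then show "v1 = v2" by (cases v1; cases v2) (simp_all add: h_def)
    qed
    show "\<forall>a\<in>ext_vertices L w. \<forall>b\<in>ext_vertices L w. GE L w (h a) (h b) = ext_adj L w a b"
    proof (intro ballI)
      fix a b :: "'a + 'a"
      show "GE L w (h a) (h b) = ext_adj L w a b" by (cases a; cases b) (simp_all add: h_def)
    qed
  qed
  moreover have "h ` ext_vertices L w = GV L A1 A1 w"
  proof
    show "h ` ext_vertices L w \<subseteq> GV L A1 A1 w"
      by (auto simp: ext_vertices_def GV_def h_def)
    show "GV L A1 A1 w \<subseteq> h ` ext_vertices L w"
    proof
      fix v assume v: "v \<in> GV L A1 A1 w"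
      show "v \<in> h ` ext_vertices L w"
      proof (cases v)
        case (Inl p)
        then obtain a where a: "p = [a]" "a # w \<in> L" using v by (auto simp: GV_def)
        then have "Inl a \<in> ext_vertices L w" by (simp add: ext_vertices_def)
        moreover have "h (Inl a) = v" using Inl a by (simp add: h_def)
        ultimately show ?thesis by (metis image_eqI)
      next
        case (Inr q)
        then obtain a where a: "q = [a]" "w @ [a] \<in> L" using v by (auto simp: GV_def)
        then have "Inr a \<in> ext_vertices L w" by (simp add: ext_vertices_def)
        moreover have "h (Inr a) = v" using Inr a by (simp add: h_def)
        ultimately show ?thesis by (metis image_eqI)
      qed
    qed
  qed
  ultimately show "ug_tree (GV (lang X) A1 A1 w) (GE (lang X) w)" by (simp add: L_def)
qed

lemma length_concat_ge: "\<forall>b\<in>set w. \<phi> b \<noteq> [] \<Longrightarrow> length w \<le> length (concat (map \<phi> w))"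
proof (induction w)
  case Nil then show ?case by simp
next
  case (Cons a w)
  then have "length (\<phi> a) \<ge> 1" by (cases "\<phi> a") auto
  then show ?case using Cons by simp
qed

theorem mainTheorem19:
  fixes A :: "'a set" and X :: "(int \<Rightarrow> 'a) set" and n :: nat
    and U :: "'a list set" and B :: "'b set" and \<phi> :: "'b \<Rightarrow> 'a list"
    and Y :: "(int \<Rightarrow> 'b) set"
  assumes "shift_space A X"
    and "eventually_dendric X n"
    and "finite U" and "U \<subseteq> lang X" and "bifix_code U"
    and "two_sided_complete X U"
    and "complete_bifix_decoding X U B \<phi> Y"
  shows "eventually_dendric Y n"
proof -
  define L where "L = lang X"
  have D: "\<forall>x\<in>L. n \<le> length x \<longrightarrow> ug_tree (GV L A1 A1 x) (GE L x)"
    using dendric_GV[OF assms(2)] by (simp add: L_def)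
  have fac: "factorial L" and exl: "extl L" and exr: "extr L"
    by (simp_all add: L_def lang_factorial lang_extl lang_extr)
  have pcU: "pc U" and scU: "sc U" using assms(5) by (simp_all add: bifix_code_def pc_def sc_def)
  have rcU: "rc L U" and lcU: "lc L U" using assms(6)
    by (simp_all add: two_sided_complete_def right_complete_def left_complete_def rc_def lc_def L_def)
  have bij: "bij_betw \<phi> B U" and LY: "lang Y = {v. set v \<subseteq> B \<and> concat (map \<phi> v) \<in> L}"
    using assms(7) by (simp_all add: complete_bifix_decoding_def L_def)
  have injp: "inj_on \<phi> B" and imp: "\<phi> ` B = U" using bij by (simp_all add: bij_betw_def)
  show ?thesis
    unfolding eventually_dendric_def
  proof (intro ballI impI)
    fix w assume w: "w \<in> lang Y" "n \<le> length w"
    define cw where "cw = concat (map \<phi> w)"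
    have sw: "set w \<subseteq> B" and cwL: "cw \<in> L" using w LY by (auto simp: cw_def)
    have TG: "ug_tree (GV L U U cw) (GE L cw)"
    proof (cases "[] \<in> U")
      case True
      have "p = []" if "p \<in> U" for p
      proof (rule ccontr)
        assume "p \<noteq> []"
        then have "strict_prefix [] p" by (auto simp: strict_prefix_def)
        then show False using that True pcU unfolding pc_def by blast
      qed
      then have "U = {[]}" using True by blast
      then show ?thesis using star_GV cwL by simp
    next
      case False
      have "\<forall>b\<in>set w. \<phi> b \<noteq> []"
      proof
        fix b assume "b \<in> set w"
        then have "\<phi> b \<in> U" using sw imp by blast
        then show "\<phi> b \<noteq> []" using False by auto
      qed
      then have "length w \<le> length cw" unfolding cw_def by (rule length_concat_ge)
      then have "n \<le> length cw" using w by simp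
      then show ?thesis using both_tree[OF fac exl exr D assms(3) pcU rcU scU lcU cwL] by simp
    qed
    have m1: "a # w \<in> lang Y \<longleftrightarrow> a \<in> B \<and> \<phi> a @ cw \<in> L" for a
      using sw by (simp add: LY cw_def)
    have m2: "w @ [b] \<in> lang Y \<longleftrightarrow> b \<in> B \<and> cw @ \<phi> b \<in> L" for b
      using sw by (simp add: LY cw_def)
    have m3: "a # w @ [b] \<in> lang Y \<longleftrightarrow> a \<in> B \<and> b \<in> B \<and> \<phi> a @ cw @ \<phi> b \<in> L" for a b
      using sw by (auto simp: LY cw_def)
    define h :: "'b + 'b \<Rightarrow> 'a list + 'a list" where "h = map_sum \<phi> \<phi>"
    define V where "V = ext_vertices (lang Y) w"
    have Vc: "v \<in> V \<longleftrightarrow> (\<exists>a\<in>B. v = Inl a \<and> \<phi> a @ cw \<in> L) \<or> (\<exists>b\<in>B. v = Inr b \<and> cw @ \<phi> b \<in> L)" for v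
      by (cases v) (auto simp: V_def ext_vertices_def m1 m2)
    have "ug_tree V (ext_adj (lang Y) w)"
    proof (rule tree_iso_rev[where h = h])
      have "h ` V = GV L U U cw"
      proof
        show "h ` V \<subseteq> GV L U U cw"
        proof
          fix v assume "v \<in> h ` V"
          then obtain v0 where "v0 \<in> V" "v = h v0" by blast
          then show "v \<in> GV L U U cw" using imp unfolding Vc by (auto simp: h_def GV_def)
        qed
        show "GV L U U cw \<subseteq> h ` V"
        proof
          fix v assume v: "v \<in> GV L U U cw"
          show "v \<in> h ` V"
          proof (cases v)
            case (Inl p)
            then have "p \<in> U" "p @ cw \<in> L" using v by (auto simp: GV_def)
            then obtain a where a: "a \<in> B" "p = \<phi> a" using imp by blast
            then have "Inl a \<in> V" using \<open>p @ cw \<in> L\<close> by (simp add: Vc)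
            moreover have "h (Inl a) = v" using Inl a by (simp add: h_def)
            ultimately show ?thesis by (metis image_eqI)
          next
            case (Inr q)
            then have "q \<in> U" "cw @ q \<in> L" using v by (auto simp: GV_def)
            then obtain b where b: "b \<in> B" "q = \<phi> b" using imp by blast
            then have "Inr b \<in> V" using \<open>cw @ q \<in> L\<close> by (simp add: Vc)
            moreover have "h (Inr b) = v" using Inr b by (simp add: h_def)
            ultimately show ?thesis by (metis image_eqI)
          qed
        qed
      qed
      then show "ug_tree (h ` V) (GE L cw)" using TG by simp
      have inB1: "a \<in> B" if "Inl a \<in> V" for a using that by (simp add: Vc)
      have inB2: "b \<in> B" if "Inr b \<in> V" for b using that by (simp add: Vc)
      show "inj_on h V"
      proof (rule inj_onI)
        fix v1 v2 assume v: "v1 \<in> V" "v2 \<in> V" "h v1 = h v2"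
        show "v1 = v2"
        proof (cases v1; cases v2)
          fix a1 a2 assume "v1 = Inl a1" "v2 = Inl a2"
          then show "v1 = v2" using v inB1 inj_onD[OF injp] by (simp add: h_def)
        next
          fix a1 a2 assume "v1 = Inr a1" "v2 = Inr a2"
          then show "v1 = v2" using v inB2 inj_onD[OF injp] by (simp add: h_def)
        next
          fix a1 a2 assume "v1 = Inl a1" "v2 = Inr a2"
          then show "v1 = v2" using v by (simp add: h_def)
        next
          fix a1 a2 assume "v1 = Inr a1" "v2 = Inl a2"
          then show "v1 = v2" using v by (simp add: h_def)
        qed
      qed
      show "\<forall>a\<in>V. \<forall>b\<in>V. GE L cw (h a) (h b) = ext_adj (lang Y) w a b"
      proof (intro ballI)
        fix v1 v2 assume v: "v1 \<in> V" "v2 \<in> V"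
        show "GE L cw (h v1) (h v2) = ext_adj (lang Y) w v1 v2"
        proof (cases v1; cases v2)
          fix a1 a2 assume "v1 = Inl a1" "v2 = Inr a2"
          then show ?thesis using v inB1 inB2 by (simp add: h_def m3)
        next
          fix a1 a2 assume "v1 = Inr a1" "v2 = Inl a2"
          then show ?thesis using v inB1 inB2 by (simp add: h_def m3)
        qed (simp_all add: h_def)
      qed
    qed
    then show "ug_tree (ext_vertices (lang Y) w) (ext_adj (lang Y) w)" by (simp add: V_def)
  qed
qed


end
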